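(* Let $L$ be an invariant intrinsic location functional and $\mathbf X$ a periodic stationary process with period $1$. Then $L(\mathbf X,[0,1])$ is uniformly distributed on $[0,1]$; in particular its density on $(0,1)$ equals $1$.
   Context: Let $H$ be a set of functions $\mathbb R\to\mathbb R$ with period $1$, invariant under shifts ($\theta_cg(x)=g(x+c)$), with the cylindrical $\sigma$-field; $\mathcal I$ is the set of compact intervals $[a,b]$, $a<b$. An intrinsic location functional is a map $L:H\times\mathcal I\to\mathbb R\cup\{\infty\}$ such that: (i) $L(\cdot,I)$ is measurable; (ii) $L(g,I)\in I\cup\{\infty\}$; (iii) $L(g,I)=L(\theta_cg,I-c)+c$ (with $\infty+c=\infty$); (iv) if $I_2\subseteq I_1$ and $L(g,I_1)\in I_2$ then $L(g,I_2)=L(g,I_1)$; (v) if $I_2\subseteq I_1$ and $L(g,I_2)\ne\infty$ then $L(g,I_1)\neq\infty$. It is called invariant if moreover $L(g,I)\ne\infty$ for all $g\in H$, $I\in\mathcal I$, and $L(g,[0,1])=L(g,[a,a+1])\pmod 1$ for all $a\in\mathbb R$, $g\in H$. A periodic stationary process with period $1$ is a stationary process with continuous sample paths of period $1$ lying in $H$. *)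

theory Defs
  imports "HOL-Probability.Probability"
begin

definition shift_fun :: "real \<Rightarrow> (real \<Rightarrow> real) \<Rightarrow> (real \<Rightarrow> real)" where
  "shift_fun c g = (\<lambda>x. g (x + c))"

definition periodic_shift_space :: "(real \<Rightarrow> real) set \<Rightarrow> bool" where
  "periodic_shift_space H \<longleftrightarrow>
     (\<forall>g\<in>H. \<forall>x. g (x + 1) = g x) \<and> (\<forall>g\<in>H. \<forall>c. shift_fun c g \<in> H)"

definition cyl_sigma :: "(real \<Rightarrow> real) set \<Rightarrow> (real \<Rightarrow> real) measure" where
  "cyl_sigma H = sigma H {{g \<in> H. g t \<in> B} | t B. B \<in> sets borel}"

definition compact_intervals :: "real set set" where
  "compact_intervals = {{a..b} | a b. a < b}"

definition intrinsic_location_functional ::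
  "(real \<Rightarrow> real) set \<Rightarrow> ((real \<Rightarrow> real) \<Rightarrow> real set \<Rightarrow> ereal) \<Rightarrow> bool" where
  "intrinsic_location_functional H L \<longleftrightarrow>
     (\<forall>I\<in>compact_intervals. (\<lambda>g. L g I) \<in> borel_measurable (cyl_sigma H)) \<and>
     (\<forall>g\<in>H. \<forall>I\<in>compact_intervals. L g I \<in> ereal ` I \<union> {\<infinity>}) \<and>
     (\<forall>g\<in>H. \<forall>I\<in>compact_intervals. \<forall>c.
        L g I = L (shift_fun c g) ((\<lambda>x. x - c) ` I) + ereal c) \<and>
     (\<forall>g\<in>H. \<forall>I1\<in>compact_intervals. \<forall>I2\<in>compact_intervals.
        I2 \<subseteq> I1 \<and> L g I1 \<in> ereal ` I2 \<longrightarrow> L g I2 = L g I1) \<and>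
     (\<forall>g\<in>H. \<forall>I1\<in>compact_intervals. \<forall>I2\<in>compact_intervals.
        I2 \<subseteq> I1 \<and> L g I2 \<noteq> \<infinity> \<longrightarrow> L g I1 \<noteq> \<infinity>)"

definition invariant_ilf ::
  "(real \<Rightarrow> real) set \<Rightarrow> ((real \<Rightarrow> real) \<Rightarrow> real set \<Rightarrow> ereal) \<Rightarrow> bool" where
  "invariant_ilf H L \<longleftrightarrow>
     intrinsic_location_functional H L \<and>
     (\<forall>g\<in>H. \<forall>I\<in>compact_intervals. L g I \<noteq> \<infinity>) \<and>
     (\<forall>g\<in>H. \<forall>a::real.
        real_of_ereal (L g {0..1}) - real_of_ereal (L g {a..a+1}) \<in> \<int>)"

definition stationary_process :: "'a measure \<Rightarrow> ('a \<Rightarrow> real \<Rightarrow> real) \<Rightarrow> bool" where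
  "stationary_process M X \<longleftrightarrow>
     (\<forall>t. (\<lambda>\<omega>. X \<omega> t) \<in> borel_measurable M) \<and>
     (\<forall>J c. finite J \<longrightarrow>
        distr M (PiM J (\<lambda>_. borel)) (\<lambda>\<omega>. \<lambda>t\<in>J. X \<omega> (t + c)) =
        distr M (PiM J (\<lambda>_. borel)) (\<lambda>\<omega>. \<lambda>t\<in>J. X \<omega> t))"

definition periodic_stationary_process ::
  "'a measure \<Rightarrow> (real \<Rightarrow> real) set \<Rightarrow> ('a \<Rightarrow> real \<Rightarrow> real) \<Rightarrow> bool" where
  "periodic_stationary_process M H X \<longleftrightarrow>
     stationary_process M X \<and>
     (\<forall>\<omega>\<in>space M. continuous_on UNIV (X \<omega>) \<and> (\<forall>x. X \<omega> (x + 1) = X \<omega> x) \<and> X \<omega> \<in> H)"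

end

theory Submission
  imports Defs
begin


lemma pure_uniform:
  fixes \<mu> :: "real measure"
  assumes ps: "prob_space \<mu>" and sets: "sets \<mu> = sets borel"
    and one: "measure \<mu> {0..1} = 1"
    and A: "\<And>c h. 0 < c \<Longrightarrow> 0 < h \<Longrightarrow> c + h \<le> 1 \<Longrightarrow> measure \<mu> {c<..<c+h} = measure \<mu> {0<..<h}"
    and B: "\<And>c. 0 < c \<Longrightarrow> c < 1 \<Longrightarrow> measure \<mu> {0,1} \<le> measure \<mu> {c}"
    and x: "0 \<le> x" "x \<le> 1"
  shows "measure \<mu> {..x} = x"
proof -
  interpret prob_space \<mu> by fact
  have S[simp]: "A \<in> sets \<mu>" if "A \<in> sets borel" for A using that sets by simp
  define \<phi> where "\<phi> h = measure \<mu> {0<..<h}" for h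
  have phimono: "\<phi> a \<le> \<phi> b" if "a \<le> b" for a b
    unfolding \<phi>_def using that by (intro finite_measure_mono) auto
  have step1: "real k * \<phi> (1/n) \<le> measure \<mu> {0<..<real k/n}" if "k \<le> n" "n \<ge> 1" for k n :: nat
    using that
  proof (induction k)
    case 0 then show ?case by simp
  next
    case (Suc k)
    have d: "{0<..<real k/n} \<inter> {real k/n<..<real (Suc k)/n} = {}" by auto
    have eqm: "\<phi> (1/n) = measure \<mu> {real k/n<..<real (Suc k)/n}"
    proof (cases "k = 0")
      case True then show ?thesis by (simp add: \<phi>_def)
    next
      case False
      have e: "real (Suc k)/n = real k/n + 1/n" by (simp add: add_divide_distrib)
      have "real k / n + 1/n \<le> 1" using Suc.prems by (simp add: e[symmetric] divide_le_eq)
      then show ?thesis unfolding e \<phi>_def using False Suc.prems by (subst A) auto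
    qed
    have "real (Suc k) * \<phi> (1/n) = real k * \<phi> (1/n) + measure \<mu> {real k/n<..<real (Suc k)/n}"
      by (simp add: algebra_simps eqm)
    also have "real k * \<phi> (1/n) + measure \<mu> {real k/n<..<real (Suc k)/n}
      \<le> measure \<mu> {0<..<real k/n} + measure \<mu> {real k/n<..<real (Suc k)/n}"
      using Suc by simp
    also have "\<dots> = measure \<mu> ({0<..<real k/n} \<union> {real k/n<..<real (Suc k)/n})"
      using d by (subst finite_measure_Union) auto
    also have "\<dots> \<le> measure \<mu> {0<..<real (Suc k)/n}"
    proof -
      have "real k / n \<le> real (Suc k)/n" "0 \<le> real k / n" by (auto simp: divide_right_mono)
      then have "{0<..<real k/n} \<union> {real k/n<..<real (Suc k)/n} \<subseteq> {0<..<real (Suc k)/n}"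
        by (auto simp del: of_nat_Suc) (smt (verit) divide_nonneg_nonneg of_nat_0_le_iff)
      then show ?thesis by (intro finite_measure_mono) auto
    qed
    finally show ?case .
  qed
  have ub: "\<phi> (1/n) \<le> 1/n" if "n \<ge> 1" for n :: nat
  proof -
    have "real n * \<phi> (1/n) \<le> measure \<mu> {0<..<real n/n}" using step1[of n n] that by simp
    then have "real n * \<phi> (1/n) \<le> 1" using prob_le_1[of "{0<..<real n/n}"] by linarith
    then show ?thesis using that by (simp add: field_simps)
  qed
  have atom: "measure \<mu> {y} = 0" if y: "0 < y" "y < 1" for y
  proof -
    have "measure \<mu> {y} \<le> e" if e: "e > 0" for e
    proof -
      obtain n :: nat where n: "1/e < n" using reals_Archimedean2 by blast
      then have n1: "n \<ge> 1" using e
        by (metis One_nat_def divide_pos_pos less_one nless_le not_le of_nat_0 zero_less_one)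
      have ne: "1/n < e" using n e n1 by (simp add: field_simps)
      define h where "h = min (1/n) (min y (1-y))"
      have h0: "h > 0" using y n1 by (simp add: h_def)
      have hy: "h \<le> y" "h \<le> 1 - y" by (simp_all add: h_def)
      have "measure \<mu> {y} \<le> measure \<mu> {y - h/2<..<(y-h/2)+h}"
        using h0 by (intro finite_measure_mono) auto
      also have "\<dots> = \<phi> h" unfolding \<phi>_def using h0 y hy
        by (intro A) linarith+
      also have "\<dots> \<le> \<phi> (1/n)" by (intro phimono) (simp add: h_def)
      also have "\<dots> \<le> 1/n" using ub n1 by blast
      finally show ?thesis using ne by linarith
    qed
    then show ?thesis using measure_nonneg[of \<mu> "{y}"]
      by (metis dual_order.antisym field_le_epsilon add_0)
  qed
  have at01: "measure \<mu> {0,1} = 0" using B[of "1/2"] atom[of "1/2"] measure_nonneg[of \<mu> "{0,1}"] by simp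
  have at0: "measure \<mu> {0} = 0" using at01 finite_measure_mono[of "{0}" "{0,1::real}"] measure_nonneg[of \<mu> "{0}"] by simp
  have at1: "measure \<mu> {1} = 0" using at01 finite_measure_mono[of "{1}" "{0,1::real}"] measure_nonneg[of \<mu> "{1}"] by simp
  have atom': "measure \<mu> {y} = 0" if "0 \<le> y" "y \<le> 1" for y
    using that atom at0 at1 by (cases "y = 0"; cases "y = 1") auto
  have halfopen: "measure \<mu> {a<..b} = measure \<mu> {a<..<b}" if "a < b" "0 \<le> b" "b \<le> 1" for a b
  proof -
    have eq: "{a<..b} = {a<..<b} \<union> {b}" using that by auto
    have "measure \<mu> {a<..b} = measure \<mu> {a<..<b} + measure \<mu> {b}"
      unfolding eq by (rule finite_measure_Union) auto
    then show ?thesis using atom' that by simp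
  qed
  have step3: "measure \<mu> {0<..real k/n} = real k * \<phi> (1/n)" if "k \<le> n" "n \<ge> 1" for k n :: nat
    using that
  proof (induction k)
    case 0 then show ?case by simp
  next
    case (Suc k)
    have eqm: "\<phi> (1/n) = measure \<mu> {real k/n<..real (Suc k)/n}"
    proof -
      have e: "real (Suc k)/n = real k/n + 1/n" by (simp add: add_divide_distrib)
      have le1: "real k / n + 1/n \<le> 1" using Suc.prems by (simp add: e[symmetric] divide_le_eq)
      have lt: "real k / n < real k/n + 1/n" using Suc.prems by simp
      have "measure \<mu> {real k/n<..real (Suc k)/n} = measure \<mu> {real k/n<..<real k/n + 1/n}"
        unfolding e using le1 lt by (subst halfopen) auto
      also have "\<dots> = \<phi> (1/n)"
      proof (cases "k = 0")
        case True then show ?thesis by (simp add: \<phi>_def)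
      next
        case False
        then show ?thesis unfolding \<phi>_def using le1 Suc.prems by (subst A) auto
      qed
      finally show ?thesis by simp
    qed
    have un: "{0<..real (Suc k)/n} = {0<..real k/n} \<union> {real k/n<..real (Suc k)/n}"
    proof -
      have "real k / n \<le> real (Suc k)/n" "0 \<le> real k / n" by (auto simp: divide_right_mono)
      then show ?thesis by (auto simp del: of_nat_Suc) (smt (verit) divide_nonneg_nonneg of_nat_0_le_iff)
    qed
    have "measure \<mu> {0<..real (Suc k)/n} = measure \<mu> {0<..real k/n} + measure \<mu> {real k/n<..real (Suc k)/n}"
      unfolding un by (subst finite_measure_Union) auto
    also have "\<dots> = real (Suc k) * \<phi> (1/n)" using Suc eqm by (simp add: algebra_simps)
    finally show ?case .
  qed
  have full: "measure \<mu> {0<..1} = 1"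
  proof -
    have eq: "{0..1::real} = {0} \<union> {0<..1}" by auto
    have "measure \<mu> {0..1} = measure \<mu> {0} + measure \<mu> {0<..1}"
      unfolding eq by (rule finite_measure_Union) auto
    then show ?thesis using one at0 by simp
  qed
  have phin: "\<phi> (1/n) = 1/n" if "n \<ge> 1" for n :: nat
    using step3[of n n] that full by (simp add: field_simps)
  have neg: "measure \<mu> {..0} = 0"
  proof -
    have "measure \<mu> ({..0} \<union> {0<..1}) = measure \<mu> {..0} + measure \<mu> {0<..1}"
      by (rule finite_measure_Union) auto
    then show ?thesis using full prob_le_1[of "{..0} \<union> {0<..1}"] measure_nonneg[of \<mu> "{..0}"] by linarith
  qed
  have grid: "measure \<mu> {..real k/n} = real k/n" if "k \<le> n" "n \<ge> 1" for k n :: nat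
  proof -
    have eq: "{..real k/n} = {..0} \<union> {0<..real k/n}" by auto (smt (verit) divide_nonneg_nonneg of_nat_0_le_iff)
    have "measure \<mu> {..real k/n} = measure \<mu> {..0} + measure \<mu> {0<..real k/n}"
      unfolding eq by (rule finite_measure_Union) auto
    then show ?thesis using neg step3[OF that] phin[OF that(2)] by simp
  qed
  have close: "\<bar>measure \<mu> {..x} - x\<bar> \<le> 1/n" if n1: "n \<ge> 1" for n :: nat
  proof -
    define k where "k = nat \<lfloor>real n * x\<rfloor>"
    have fl: "real k \<le> real n * x" "real n * x < real k + 1"
      using x by (auto simp: k_def)
    have "real n * x \<le> real n" using x by (simp add: mult_left_le)
    then have "real k \<le> real n" using fl by linarith
    then have kn: "k \<le> n" by simp
    have lo: "real k / n \<le> x" using fl n1 by (simp add: field_simps)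
    have "measure \<mu> {..real k/n} \<le> measure \<mu> {..x}" using lo by (intro finite_measure_mono) auto
    then have L: "real k/n \<le> measure \<mu> {..x}" using grid[OF kn n1] by simp
    have e1: "x - 1/n = (real n * x - 1)/n" using n1 by (simp add: field_simps)
    have e2: "x + 1/n = (real n * x + 1)/n" using n1 by (simp add: field_simps)
    have e3: "x = (real n * x)/n" using n1 by (simp add: field_simps)
    have L2: "x - 1/n \<le> real k / n" unfolding e1 using fl by (intro divide_right_mono) auto
    have U: "measure \<mu> {..x} \<le> x + 1/n"
    proof (cases "k = n")
      case True
      have "real n * 1 \<le> real n * x" using fl True by simp
      then have "1 \<le> x" using n1 by (simp add: mult_le_cancel_left_pos)
      moreover have "0 \<le> 1 / real n" by simp
      ultimately show ?thesis using prob_le_1[of "{..x}"] by linarith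
    next
      case False
      then have k1: "Suc k \<le> n" using kn by simp
      have "(real n * x)/n \<le> real (Suc k) / n" using fl by (intro divide_right_mono) auto
      then have "x \<le> real (Suc k) / n" using e3 by linarith
      then have "measure \<mu> {..x} \<le> measure \<mu> {..real (Suc k)/n}" by (intro finite_measure_mono) auto
      also have "\<dots> = real (Suc k)/n" using grid[OF k1 n1] .
      also have "\<dots> \<le> x + 1/n" unfolding e2 using fl by (intro divide_right_mono) auto
      finally show ?thesis .
    qed
    show ?thesis using L L2 U by linarith
  qed
  show ?thesis
  proof (rule ccontr)
    assume ne: "measure \<mu> {..x} \<noteq> x"
    define d where "d = \<bar>measure \<mu> {..x} - x\<bar>"
    have d0: "d > 0" using ne by (simp add: d_def)
    obtain n :: nat where n: "1/d < n" using reals_Archimedean2 by blast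
    then have n1: "n \<ge> 1" using d0
      by (metis One_nat_def divide_pos_pos less_one nless_le not_le of_nat_0 zero_less_one)
    have "1/n < d" using n d0 n1 by (simp add: field_simps)
    then show False using close[OF n1] d_def by linarith
  qed
qed


lemma PiE_UNIV_UNIV: "(\<Pi>\<^sub>E i\<in>(UNIV::real set). (UNIV::real set)) = UNIV"
  by (auto simp: PiE_def extensional_def)

lemma space_P: "space (PiM (UNIV::real set) (\<lambda>_. borel::real measure)) = UNIV"
  by (simp add: space_PiM PiE_UNIV_UNIV)

lemma sets_cyl_sigma:
  fixes H :: "(real \<Rightarrow> real) set"
  assumes "A \<in> sets (cyl_sigma H)"
  shows "\<exists>A' \<in> sets (PiM (UNIV::real set) (\<lambda>_. borel::real measure)). A = A' \<inter> H"
proof -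
  let ?G0 = "{{f\<in>\<Pi>\<^sub>E i\<in>(UNIV::real set). space (borel::real measure). f i \<in> B} | i B. i \<in> UNIV \<and> B \<in> sets borel}"
  have sP: "sets (PiM (UNIV::real set) (\<lambda>_. borel::real measure)) = sigma_sets UNIV ?G0"
    by (subst sets_PiM_single) (simp add: PiE_UNIV_UNIV)
  have G1: "{{g \<in> H. g t \<in> B} | t B. B \<in> sets borel} = {id -` A \<inter> H | A. A \<in> ?G0}"
  proof (intro equalityI subsetI)
    fix S assume "S \<in> {{g \<in> H. g t \<in> B} | t B. B \<in> sets borel}"
    then obtain t B where tb: "S = {g \<in> H. g t \<in> B}" "B \<in> sets borel" by blast
    have "S = id -` {f\<in>\<Pi>\<^sub>E i\<in>(UNIV::real set). space (borel::real measure). f t \<in> B} \<inter> H"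
      using tb by (auto simp: PiE_UNIV_UNIV)
    moreover have "{f\<in>\<Pi>\<^sub>E i\<in>(UNIV::real set). space (borel::real measure). f t \<in> B} \<in> ?G0"
      using tb by blast
    ultimately show "S \<in> {id -` A \<inter> H | A. A \<in> ?G0}" by blast
  next
    fix S assume "S \<in> {id -` A \<inter> H | A. A \<in> ?G0}"
    then obtain A where a: "S = id -` A \<inter> H" "A \<in> ?G0" by blast
    then obtain t B where tb: "A = {f\<in>\<Pi>\<^sub>E i\<in>(UNIV::real set). space (borel::real measure). f t \<in> B}" "B \<in> sets borel"
      by blast
    have "S = {g \<in> H. g t \<in> B}" using a tb by (auto simp: PiE_UNIV_UNIV)
    then show "S \<in> {{g \<in> H. g t \<in> B} | t B. B \<in> sets borel}" using tb by blast
  qed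
  have "sets (cyl_sigma H) = sigma_sets H {{g \<in> H. g t \<in> B} | t B. B \<in> sets borel}"
    unfolding cyl_sigma_def by (rule sets_measure_of) auto
  also have "\<dots> = {id -` A \<inter> H | A. A \<in> sigma_sets UNIV ?G0}"
    unfolding G1 by (rule sigma_sets_vimage_commute[symmetric]) auto
  finally show ?thesis using assms sP by auto
qed

lemma measurable_cyl:
  fixes H :: "(real \<Rightarrow> real) set" and Y :: "'a \<Rightarrow> real \<Rightarrow> real"
  assumes "\<And>t. (\<lambda>\<omega>. Y \<omega> t) \<in> borel_measurable M" "\<And>\<omega>. \<omega> \<in> space M \<Longrightarrow> Y \<omega> \<in> H"
  shows "Y \<in> measurable M (cyl_sigma H)"
  unfolding cyl_sigma_def
proof (rule measurable_measure_of)
  show "Y \<in> space M \<rightarrow> H" using assms(2) by auto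
  fix A assume "A \<in> {{g \<in> H. g t \<in> B} | t B. B \<in> sets borel}"
  then obtain t B where A: "A = {g \<in> H. g t \<in> B}" "B \<in> sets borel" by auto
  have "Y -` A \<inter> space M = (\<lambda>\<omega>. Y \<omega> t) -` B \<inter> space M" using assms(2) A by auto
  then show "Y -` A \<inter> space M \<in> sets M" using measurable_sets[OF assms(1) A(2)] by simp
qed auto

lemma measurable_P:
  fixes Y :: "'a \<Rightarrow> real \<Rightarrow> real"
  assumes "\<And>t. (\<lambda>\<omega>. Y \<omega> t) \<in> borel_measurable M"
  shows "Y \<in> measurable M (PiM (UNIV::real set) (\<lambda>_. borel::real measure))"
proof -
  have "(\<lambda>\<omega> t. Y \<omega> t) \<in> measurable M (PiM (UNIV::real set) (\<lambda>_. borel::real measure))"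
    by (rule measurable_PiM_single') (auto simp: assms PiE_UNIV_UNIV)
  then show ?thesis by simp
qed

lemma law_eq:
  fixes H :: "(real \<Rightarrow> real) set" and Y1 Y2 :: "'a \<Rightarrow> real \<Rightarrow> real"
    and F :: "(real \<Rightarrow> real) \<Rightarrow> real"
  assumes ps: "prob_space M"
    and m1: "\<And>t. (\<lambda>\<omega>. Y1 \<omega> t) \<in> borel_measurable M" and h1: "\<And>\<omega>. \<omega> \<in> space M \<Longrightarrow> Y1 \<omega> \<in> H"
    and m2: "\<And>t. (\<lambda>\<omega>. Y2 \<omega> t) \<in> borel_measurable M" and h2: "\<And>\<omega>. \<omega> \<in> space M \<Longrightarrow> Y2 \<omega> \<in> H"
    and fd: "\<And>J. finite J \<Longrightarrow> distr M (PiM J (\<lambda>_. borel)) (\<lambda>\<omega>. \<lambda>t\<in>J. Y1 \<omega> t) =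
               distr M (PiM J (\<lambda>_. borel)) (\<lambda>\<omega>. \<lambda>t\<in>J. Y2 \<omega> t)"
    and F: "F \<in> borel_measurable (cyl_sigma H)"
  shows "distr M borel (\<lambda>\<omega>. F (Y1 \<omega>)) = distr M borel (\<lambda>\<omega>. F (Y2 \<omega>))"
proof -
  let ?P = "PiM (UNIV::real set) (\<lambda>_. borel::real measure)"
  have P1: "Y1 \<in> measurable M ?P" by (rule measurable_P[OF m1])
  have P2: "Y2 \<in> measurable M ?P" by (rule measurable_P[OF m2])
  have C1: "Y1 \<in> measurable M (cyl_sigma H)" by (rule measurable_cyl[OF m1 h1])
  have C2: "Y2 \<in> measurable M (cyl_sigma H)" by (rule measurable_cyl[OF m2 h2])
  have restr: "(\<lambda>\<omega>. \<lambda>t\<in>J. Y \<omega> t) \<in> measurable M (PiM J (\<lambda>_. borel::real measure))"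
    if "\<And>t. (\<lambda>\<omega>. Y \<omega> t) \<in> borel_measurable M" for J and Y :: "'a \<Rightarrow> real \<Rightarrow> real"
    using that by (intro measurable_restrict) auto
  have PP: "distr M ?P Y1 = distr M ?P Y2"
  proof (rule measure_eqI_PiM_infinite)
    show "sets (distr M ?P Y1) = sets ?P" "sets (distr M ?P Y2) = sets ?P" by auto
    show "finite_measure (distr M ?P Y1)"
      using prob_space.prob_space_distr[OF ps P1] by (simp add: prob_space_def)
    fix A :: "real \<Rightarrow> real set" and J :: "real set" assume J: "finite J" "J \<subseteq> UNIV" "\<And>i. i \<in> J \<Longrightarrow> A i \<in> sets (borel::real measure)"
    have PJ: "Pi\<^sub>E J A \<in> sets (PiM J (\<lambda>_. borel::real measure))"
      using J by (intro sets_PiM_I_finite) auto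
    have pe: "prod_emb UNIV (\<lambda>_. borel::real measure) J (Pi\<^sub>E J A) \<in> sets ?P"
      using J by (intro measurable_prod_emb sets_PiM_I_finite) auto
    have vv: "Y -` prod_emb UNIV (\<lambda>_. borel::real measure) J (Pi\<^sub>E J A) \<inter> space M
          = (\<lambda>\<omega>. \<lambda>t\<in>J. Y \<omega> t) -` Pi\<^sub>E J A \<inter> space M" for Y :: "'a \<Rightarrow> real \<Rightarrow> real"
      by (auto simp: prod_emb_def PiE_UNIV_UNIV)
    have "emeasure (distr M ?P Y1) (prod_emb UNIV (\<lambda>_. borel) J (Pi\<^sub>E J A))
        = emeasure (distr M (PiM J (\<lambda>_. borel)) (\<lambda>\<omega>. \<lambda>t\<in>J. Y1 \<omega> t)) (Pi\<^sub>E J A)"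
      using pe PJ P1 restr[OF m1] by (simp add: emeasure_distr vv)
    also have "\<dots> = emeasure (distr M (PiM J (\<lambda>_. borel)) (\<lambda>\<omega>. \<lambda>t\<in>J. Y2 \<omega> t)) (Pi\<^sub>E J A)"
      using fd[OF J(1)] by simp
    also have "\<dots> = emeasure (distr M ?P Y2) (prod_emb UNIV (\<lambda>_. borel) J (Pi\<^sub>E J A))"
      using pe PJ P2 restr[OF m2] by (simp add: emeasure_distr vv)
    finally show "emeasure (distr M ?P Y1) (prod_emb UNIV (\<lambda>_. borel) J (Pi\<^sub>E J A))
        = emeasure (distr M ?P Y2) (prod_emb UNIV (\<lambda>_. borel) J (Pi\<^sub>E J A))" .
  qed
  have CC: "distr M (cyl_sigma H) Y1 = distr M (cyl_sigma H) Y2"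
  proof (rule measure_eqI)
    show "sets (distr M (cyl_sigma H) Y1) = sets (distr M (cyl_sigma H) Y2)" by simp
    fix A assume "A \<in> sets (distr M (cyl_sigma H) Y1)"
    then have A: "A \<in> sets (cyl_sigma H)" by simp
    then obtain A' where A': "A' \<in> sets ?P" "A = A' \<inter> H" using sets_cyl_sigma by blast
    have v1: "Y1 -` A \<inter> space M = Y1 -` A' \<inter> space M" using h1 A' by auto
    have v2: "Y2 -` A \<inter> space M = Y2 -` A' \<inter> space M" using h2 A' by auto
    have "emeasure (distr M (cyl_sigma H) Y1) A = emeasure M (Y1 -` A \<inter> space M)"
      by (rule emeasure_distr[OF C1 A])
    also have "\<dots> = emeasure (distr M ?P Y1) A'"
      unfolding v1 by (rule emeasure_distr[OF P1 A'(1), symmetric])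
    also have "\<dots> = emeasure (distr M ?P Y2) A'" using PP by simp
    also have "\<dots> = emeasure M (Y2 -` A \<inter> space M)"
      unfolding v2 by (rule emeasure_distr[OF P2 A'(1)])
    also have "\<dots> = emeasure (distr M (cyl_sigma H) Y2) A"
      by (rule emeasure_distr[OF C2 A, symmetric])
    finally show "emeasure (distr M (cyl_sigma H) Y1) A = emeasure (distr M (cyl_sigma H) Y2) A" .
  qed
  have "distr M borel (\<lambda>\<omega>. F (Y1 \<omega>)) = distr (distr M (cyl_sigma H) Y1) borel F"
    using C1 F by (subst distr_distr) (auto simp: comp_def)
  also have "\<dots> = distr (distr M (cyl_sigma H) Y2) borel F" using CC by simp
  also have "\<dots> = distr M borel (\<lambda>\<omega>. F (Y2 \<omega>))"
    using C2 F by (subst distr_distr) (auto simp: comp_def)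
  finally show ?thesis .
qed


lemma cong_cases:
  fixes s t c :: real and m :: int
  assumes s: "0 \<le> s" "s \<le> 1" and t: "0 \<le> t" "t \<le> 1" and e: "s = t - c + of_int m"
  shows cong_a: "0 < c \<Longrightarrow> 0 < h \<Longrightarrow> c + h \<le> 1 \<Longrightarrow> (s \<in> {0<..<h} \<longleftrightarrow> t \<in> {c<..<c+h})"
    and cong_b: "0 < c \<Longrightarrow> c < 1 \<Longrightarrow> t \<in> {0,1} \<Longrightarrow> s = 1 - c"
proof -
  have "m \<le> -1 \<or> m = 0 \<or> m = 1 \<or> m \<ge> 2" by arith
  then consider "real_of_int m \<le> -1" | "m = 0" | "m = 1" | "real_of_int m \<ge> 2" by fastforce
  note mc = this
  show "0 < c \<Longrightarrow> 0 < h \<Longrightarrow> c + h \<le> 1 \<Longrightarrow> (s \<in> {0<..<h} \<longleftrightarrow> t \<in> {c<..<c+h})"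
    unfolding greaterThanLessThan_iff by (cases rule: mc) (use s t e in linarith)+
  show "0 < c \<Longrightarrow> c < 1 \<Longrightarrow> t \<in> {0,1} \<Longrightarrow> s = 1 - c"
  proof -
    assume c: "0 < c" "c < 1" and "t \<in> {0,1}"
    then consider "t = 0" | "t = 1" by auto
    then show "s = 1 - c"
    proof cases
      case 1 then show ?thesis by (cases rule: mc) (use s t e c in linarith)+
    next
      case 2 then show ?thesis by (cases rule: mc) (use s t e c in linarith)+
    qed
  qed
qed

lemma image_shift_Icc: "(\<lambda>x::real. x - c) ` {c..c+1} = {0..1}"
proof -
  have "(\<lambda>x::real. x - c) ` {c..c+1} = (\<lambda>x. x + (-c)) ` {c..c+1}" by simp
  also have "\<dots> = {0..1}" by (simp add: image_add_atLeastAtMost')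
  finally show ?thesis .
qed

theorem mainTheorem5:
  fixes H :: "(real \<Rightarrow> real) set"
    and L :: "(real \<Rightarrow> real) \<Rightarrow> real set \<Rightarrow> ereal"
    and M :: "'a measure"
    and X :: "'a \<Rightarrow> real \<Rightarrow> real"
  assumes "periodic_shift_space H"
    and "invariant_ilf H L"
    and "prob_space M"
    and "periodic_stationary_process M H X"
  shows "distributed M lborel (\<lambda>\<omega>. real_of_ereal (L (X \<omega>) {0..1}))
           (\<lambda>x. ennreal (indicator {0..1} x))"
proof -
  interpret P: prob_space M by fact
  have psH: "periodic_shift_space H" by fact
  have shiftH: "\<And>g c. g \<in> H \<Longrightarrow> shift_fun c g \<in> H"
    using psH[unfolded periodic_shift_space_def, THEN conjunct2] by blast
  note inv_all = assms(2)[unfolded invariant_ilf_def]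
  have ilf: "intrinsic_location_functional H L" using inv_all by (rule conjunct1)
  have nInf: "\<And>g I. g \<in> H \<Longrightarrow> I \<in> compact_intervals \<Longrightarrow> L g I \<noteq> \<infinity>"
    using inv_all[THEN conjunct2, THEN conjunct1] by blast
  have inv: "\<And>g a. g \<in> H \<Longrightarrow> real_of_ereal (L g {0..1}) - real_of_ereal (L g {a..a+1}) \<in> \<int>"
    using inv_all[THEN conjunct2, THEN conjunct2] by blast
  note ilf_all = ilf[unfolded intrinsic_location_functional_def]
  have Lmeas: "\<And>I. I \<in> compact_intervals \<Longrightarrow> (\<lambda>g. L g I) \<in> borel_measurable (cyl_sigma H)"
    using ilf_all[THEN conjunct1] by blast
  have Lrange: "\<And>g I. g \<in> H \<Longrightarrow> I \<in> compact_intervals \<Longrightarrow> L g I \<in> ereal ` I \<union> {\<infinity>}"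
    using ilf_all[THEN conjunct2, THEN conjunct1] by blast
  have Lshift: "\<And>g I c. g \<in> H \<Longrightarrow> I \<in> compact_intervals \<Longrightarrow> L g I = L (shift_fun c g) ((\<lambda>x. x - c) ` I) + ereal c"
    using ilf_all[THEN conjunct2, THEN conjunct2, THEN conjunct1] by blast
  note sp_all = assms(4)[unfolded periodic_stationary_process_def stationary_process_def]
  have Xmeas: "\<And>t. (\<lambda>\<omega>. X \<omega> t) \<in> borel_measurable M"
    using sp_all[THEN conjunct1, THEN conjunct1] by blast
  have fd: "\<And>J c. finite J \<Longrightarrow> distr M (PiM J (\<lambda>_. borel)) (\<lambda>\<omega>. \<lambda>t\<in>J. X \<omega> (t + c)) =
        distr M (PiM J (\<lambda>_. borel)) (\<lambda>\<omega>. \<lambda>t\<in>J. X \<omega> t)"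
    using sp_all[THEN conjunct1, THEN conjunct2] by blast
  have XH: "\<And>\<omega>. \<omega> \<in> space M \<Longrightarrow> X \<omega> \<in> H"
    using sp_all[THEN conjunct2] by blast
  have I01: "{0..1::real} \<in> compact_intervals" unfolding compact_intervals_def by auto
  have Ic: "{c..c+1::real} \<in> compact_intervals" for c unfolding compact_intervals_def by fastforce
  define F where "F g = real_of_ereal (L g {0..1})" for g
  have Fm: "F \<in> borel_measurable (cyl_sigma H)" unfolding F_def
    using Lmeas[OF I01] by measurable
  have Frange: "F g \<in> {0..1} \<and> L g {0..1} = ereal (F g)" if "g \<in> H" for g
  proof -
    from Lrange[OF that I01] nInf[OF that I01] obtain r where "r \<in> {0..1}" "L g {0..1} = ereal r" by auto
    then show ?thesis by (simp add: F_def)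
  qed
  define T where "T \<omega> = F (X \<omega>)" for \<omega>
  define S where "S c \<omega> = F (shift_fun c (X \<omega>))" for c \<omega>
  have cong: "T \<omega> \<in> {0..1} \<and> S c \<omega> \<in> {0..1} \<and> (\<exists>m::int. S c \<omega> = T \<omega> - c + of_int m)"
    if \<omega>: "\<omega> \<in> space M" for \<omega> c
  proof -
    have g: "X \<omega> \<in> H" using XH \<omega> .
    have sg: "shift_fun c (X \<omega>) \<in> H" using shiftH[OF g] .
    have "L (X \<omega>) {c..c+1} = L (shift_fun c (X \<omega>)) {0..1} + ereal c"
      using Lshift[OF g Ic[of c], of c] by simp
    also have "\<dots> = ereal (S c \<omega> + c)" using Frange[OF sg] by (simp add: S_def)
    finally have "real_of_ereal (L (X \<omega>) {c..c+1}) = S c \<omega> + c" by simp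
    with inv[OF g, of c] have "T \<omega> - (S c \<omega> + c) \<in> \<int>" by (simp add: T_def F_def)
    then obtain k where k: "T \<omega> - (S c \<omega> + c) = of_int k" by (auto elim: Ints_cases)
    then have "S c \<omega> = T \<omega> - c + of_int (-k)" by simp
    moreover have "T \<omega> \<in> {0..1}" "S c \<omega> \<in> {0..1}" using Frange[OF g] Frange[OF sg] by (auto simp: T_def S_def)
    ultimately show ?thesis by blast
  qed
  have XC: "X \<in> measurable M (cyl_sigma H)" by (rule measurable_cyl[OF Xmeas XH])
  have Tm: "T \<in> borel_measurable M" unfolding T_def using measurable_comp[OF XC Fm] by (simp add: comp_def)
  have Sm: "S c \<in> borel_measurable M" for c
  proof -
    have "(\<lambda>\<omega>. shift_fun c (X \<omega>)) \<in> measurable M (cyl_sigma H)"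
    proof (rule measurable_cyl)
      show "(\<lambda>\<omega>. shift_fun c (X \<omega>) t) \<in> borel_measurable M" for t by (simp add: shift_fun_def Xmeas)
      show "shift_fun c (X \<omega>) \<in> H" if "\<omega> \<in> space M" for \<omega> using shiftH XH that by blast
    qed
    then show ?thesis unfolding S_def using measurable_comp[OF _ Fm] by (simp add: comp_def)
  qed
  have lawS: "distr M borel (S c) = distr M borel T" for c
  proof -
    have "distr M borel (\<lambda>\<omega>. F (shift_fun c (X \<omega>))) = distr M borel (\<lambda>\<omega>. F (X \<omega>))"
    proof (rule law_eq[OF assms(3) _ _ Xmeas XH _ Fm])
      show "(\<lambda>\<omega>. shift_fun c (X \<omega>) t) \<in> borel_measurable M" for t
        by (simp add: shift_fun_def Xmeas)
      show "shift_fun c (X \<omega>) \<in> H" if "\<omega> \<in> space M" for \<omega> using shiftH XH that by blast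
      show "distr M (PiM J (\<lambda>_. borel)) (\<lambda>\<omega>. \<lambda>t\<in>J. shift_fun c (X \<omega>) t) =
               distr M (PiM J (\<lambda>_. borel)) (\<lambda>\<omega>. \<lambda>t\<in>J. X \<omega> t)" if "finite J" for J
        using fd[OF that, of c] by (simp add: shift_fun_def)
    qed
    moreover have "S c = (\<lambda>\<omega>. F (shift_fun c (X \<omega>)))" "T = (\<lambda>\<omega>. F (X \<omega>))"
      by (auto simp: S_def T_def)
    ultimately show ?thesis by simp
  qed
  define \<mu> where "\<mu> = distr M borel T"
  have mu: "measure \<mu> B = measure M (T -` B \<inter> space M)" if "B \<in> sets borel" for B
    unfolding \<mu>_def using Tm that by (rule measure_distr)
  have muS: "measure \<mu> B = measure M (S c -` B \<inter> space M)" if "B \<in> sets borel" for B c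
    unfolding \<mu>_def lawS[of c, symmetric] using Sm[of c] that by (rule measure_distr)
  have pure: "measure \<mu> {..x} = x" if "0 \<le> x" "x \<le> 1" for x
  proof (rule pure_uniform[OF _ _ _ _ _ that])
    show "prob_space \<mu>" unfolding \<mu>_def using Tm by (rule P.prob_space_distr)
    show "sets \<mu> = sets borel" by (simp add: \<mu>_def)
    have "T -` {0..1} \<inter> space M = space M" using cong by auto
    then show "measure \<mu> {0..1} = 1" by (simp add: mu P.prob_space)
    show "measure \<mu> {c<..<c+h} = measure \<mu> {0<..<h}" if "0 < c" "0 < h" "c + h \<le> 1" for c h
    proof -
      have "T -` {c<..<c+h} \<inter> space M = S c -` {0<..<h} \<inter> space M"
      proof (intro set_eqI iffI)
        fix \<omega> assume a: "\<omega> \<in> T -` {c<..<c+h} \<inter> space M"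
        then obtain m :: int where "S c \<omega> = T \<omega> - c + of_int m" "T \<omega> \<in> {0..1}" "S c \<omega> \<in> {0..1}" using cong by blast
        then show "\<omega> \<in> S c -` {0<..<h} \<inter> space M" using cong_a[of "S c \<omega>" "T \<omega>" c m h] a that by auto
      next
        fix \<omega> assume a: "\<omega> \<in> S c -` {0<..<h} \<inter> space M"
        then obtain m :: int where "S c \<omega> = T \<omega> - c + of_int m" "T \<omega> \<in> {0..1}" "S c \<omega> \<in> {0..1}" using cong by blast
        then show "\<omega> \<in> T -` {c<..<c+h} \<inter> space M" using cong_a[of "S c \<omega>" "T \<omega>" c m h] a that by auto
      qed
      then show ?thesis using mu[of "{c<..<c+h}"] muS[of "{0<..<h}" c] by simp
    qed
    show "measure \<mu> {0,1} \<le> measure \<mu> {c}" if "0 < c" "c < 1" for c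
    proof -
      have "T -` {0,1} \<inter> space M \<subseteq> S (1 - c) -` {c} \<inter> space M"
      proof
        fix \<omega> assume a: "\<omega> \<in> T -` {0,1} \<inter> space M"
        then obtain m :: int where "S (1-c) \<omega> = T \<omega> - (1-c) + of_int m" "T \<omega> \<in> {0..1}" "S (1-c) \<omega> \<in> {0..1}" using cong by blast
        then show "\<omega> \<in> S (1 - c) -` {c} \<inter> space M" using cong_b[of "S (1-c) \<omega>" "T \<omega>" "1-c" m] a that by auto
      qed
      then have "measure M (T -` {0,1} \<inter> space M) \<le> measure M (S (1 - c) -` {c} \<inter> space M)"
        using Sm by (intro P.finite_measure_mono) auto
      then show ?thesis using mu[of "{0,1}"] muS[of "{c}" "1-c"] by simp
    qed
  qed
  define g where "g a = max 0 (min 1 a)" for a :: real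
  have "distributed M lborel T (indicator {0..1} :: real \<Rightarrow> real)"
  proof (rule distributedI_borel_atMost[where g = g])
    show "T \<in> borel_measurable M" by fact
    show "(indicator {0..1} :: real \<Rightarrow> real) \<in> borel_measurable borel" by measurable
    show "AE x in lborel. 0 \<le> (indicator {0..1} x :: real)" by simp
    show "(\<integral>\<^sup>+x. ennreal (indicator {0..1} x * indicator {..a} x) \<partial>lborel) = ennreal (g a)" for a
    proof -
      have "(\<integral>\<^sup>+x. ennreal (indicator {0..1} x * indicator {..a} x) \<partial>lborel) = emeasure lborel ({0..1} \<inter> {..a})"
        by (simp add: indicator_inter_arith[symmetric] ennreal_indicator)
      also have "\<dots> = ennreal (g a)"
      proof (cases "a < 0")
        case True then have "{0..1::real} \<inter> {..a} = {}" by auto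
        then show ?thesis using True by (simp add: g_def)
      next
        case False then have "{0..1::real} \<inter> {..a} = {0..min 1 a}" by auto
        then show ?thesis using False by (simp add: g_def)
      qed
      finally show ?thesis .
    qed
    show "emeasure M {x \<in> space M. T x \<le> a} = ennreal (g a)" for a
    proof -
      have e: "{x \<in> space M. T x \<le> a} = T -` {..a} \<inter> space M" by auto
      have "emeasure M {x \<in> space M. T x \<le> a} = ennreal (measure \<mu> {..a})"
        unfolding e by (simp add: mu P.emeasure_eq_measure)
      also have "measure \<mu> {..a} = g a"
      proof (cases "a < 0")
        case True
        then have "T -` {..a} \<inter> space M = {}" using cong by fastforce
        then show ?thesis using True by (simp add: mu g_def)
      next
        case False
        show ?thesis
        proof (cases "a \<le> 1")
          case True then show ?thesis using False pure[of a] by (simp add: g_def)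
        next
          case False2: False
          then have "T -` {..a} \<inter> space M = space M" using cong by fastforce
          then show ?thesis using False False2 by (simp add: mu g_def P.prob_space)
        qed
      qed
      finally show ?thesis .
    qed
  qed
  moreover have "T = (\<lambda>\<omega>. real_of_ereal (L (X \<omega>) {0..1}))" by (auto simp: T_def F_def)
  ultimately show ?thesis by simp
qed
end
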